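(* Assume all hypotheses of the setting below. Let $\tilde y\in\mathbb{R}^d$ satisfy $\|\nabla g(\tilde y)\|\le\varepsilon_1$ and $\lambda_{\min}(\nabla^2g(\tilde y))\le-\varepsilon_2$, and let $e_0$ be a unit eigenvector of $\nabla^2 g(\tilde y)$ for its smallest eigenvalue. Let $y_0,y_0'\in\mathbb{R}^d$ satisfy $y_0=y_0'+\eta r_0e_0$ and $\max\{\|y_0-\tilde y\|,\|y_0'-\tilde y\|\}\le\eta r$, where $r_0\ge\omega:=\frac1\eta2^{3-\gamma}R$. Define $y_{t+1}=y_t-\eta G(y_t)$ and $y'_{t+1}=y'_t-\eta G(y'_t)$. Then $$\min\{g(y_M)-g(y_0),\ g(y_M')-g(y_0')\}\le-F.$$
   Context: Setting: $g\colon\mathbb{R}^d\to\mathbb{R}$ is bounded below with $L_1$-Lipschitz gradient, and there are $\alpha,\beta,L_2>0$ such that for every $\bar x$ with $\|\nabla g(\bar x)\|\le\alpha$, $g$ is $C^2$ on $\mathbb{B}_\beta(\bar x)$ with $L_2$-Lipschitz Hessian there. $G$ is an $(a,b)$-inexact gradient oracle for $g$, i.e. $\|\nabla g(x)-G(x)\|\le a\|\nabla g(x)\|+b$ for all $x$. Fix $\Delta_g>0$ (an upper bound on $g(x_0)-\inf g$ for a reference point $x_0$), $\delta\in(0,1)$, $\varepsilon_1\in(0,\alpha)$, and define $\phi:=2^{24}\max\{1,5\frac{L_2\varepsilon_1}{L_1\varepsilon_2}\}\frac{L_1^2}{\delta}\sqrt d(\Delta_g\max\{\frac{L_2^2}{\varepsilon_2^5},\frac{1}{\varepsilon_1^2\varepsilon_2}\}+\frac1{\varepsilon_2^2})$,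 $\gamma:=\log_2(\phi(\log_2\phi)^8)$, $F:=\frac{1}{800\gamma^3}\frac{1-a}{(1+a)^2}\frac{\varepsilon_2^3}{L_2^2}$, $R:=\frac{\varepsilon_2}{4\gamma L_2}$, $\eta:=\frac{1-a}{(1+a)^2L_1}$, $r:=\frac{\varepsilon_2^2}{400L_2\gamma^3}\min\{1,\frac{L_1\varepsilon_2}{5\varepsilon_1L_2}\}$, $M:=\frac{(1+a)^2}{1-a}\frac{L_1\gamma}{\varepsilon_2}$ (treated as a positive integer). Assume $\varepsilon_2\in(0,\min\{4\gamma\beta L_2,L_1,L_1^2\})$, $a\le\min\{\frac1{20},\frac{1}{L_1\eta M2^{\gamma+2}},\frac{R}{\varepsilon_1\eta M2^{\gamma+2}}\}$ and $b\le\min\{\frac{\varepsilon_1}{64},(\frac{F}{40\eta M})^{1/2},(\frac{L_1F}{M(5L_1+1)})^{1/2},\frac{R}{M\eta2^{\gamma+2}}\}$. *)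

theory Defs
  imports "HOL-Analysis.Analysis"
begin

text \<open>Real eigenvalues of a square matrix, and the smallest one
  (for the symmetric Hessians considered here all eigenvalues are real and
  this set is finite and nonempty, so the infimum is the minimum).\<close>

definition real_eigenvalues :: "real^'n^'n \<Rightarrow> real set" where
  "real_eigenvalues A = {c. \<exists>v. v \<noteq> 0 \<and> A *v v = c *\<^sub>R v}"

definition lambda_min :: "real^'n^'n \<Rightarrow> real" where
  "lambda_min A = Inf (real_eigenvalues A)"

end

theory Submission
  imports Defs
begin

lemma deriv_lip_bound:
  fixes f :: "'a::real_normed_vector \<Rightarrow> 'b::real_normed_vector"
  assumes d: "(f has_derivative f') (at x)" and lip: "\<And>y. norm (f y - f x) \<le> L * norm (y - x)"
  shows "norm (f' h) \<le> L * norm h"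
proof -
  have bl: "bounded_linear f'" using d by (simp add: has_derivative_at_alt)
  hence lin: "linear f'" by (rule bounded_linear.linear)
  show ?thesis
  proof (cases "h = 0")
    case True
    then show ?thesis using lin linear_0 by auto
  next
    case False
    show ?thesis
    proof (rule field_le_epsilon)
      fix e :: real assume e0: "e > 0"
      hence "e / norm h > 0" using False by simp
      then obtain d where d0: "d > 0" and dd: "\<forall>y. norm (y - x) < d \<longrightarrow> norm (f y - f x - f' (y - x)) \<le> (e / norm h) * norm (y - x)"
        using d unfolding has_derivative_at_alt by blast
      define c where "c = d / (2 * norm h)"
      have c0: "c > 0" using d0 False by (simp add: c_def)
      have ny: "norm ((x + c *\<^sub>R h) - x) = c * norm h" using c0 by simp
      have "c * norm h < d" using d0 False by (simp add: c_def)
      hence le: "norm (f (x + c *\<^sub>R h) - f x - f' (c *\<^sub>R h)) \<le> (e / norm h) * (c * norm h)"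
        using dd[rule_format, of "x + c *\<^sub>R h"] ny c0 False by simp
      have le2: "(e / norm h) * (c * norm h) = e * c" using False by simp
      have fc: "f' (c *\<^sub>R h) = c *\<^sub>R f' h" using lin by (simp add: linear_scale)
      have "c * norm (f' h) = norm (f' (c *\<^sub>R h))" using c0 fc by simp
      also have "\<dots> \<le> norm (f (x + c *\<^sub>R h) - f x) + norm (f (x + c *\<^sub>R h) - f x - f' (c *\<^sub>R h))"
        by (metis norm_minus_commute norm_triangle_sub)
      also have "\<dots> \<le> L * (c * norm h) + e * c"
        using lip[of "x + c *\<^sub>R h"] ny le le2 c0 False by simp
      finally have "c * norm (f' h) \<le> c * (L * norm h + e)" by (simp add: algebra_simps)
      thus "norm (f' h) \<le> L * norm h + e" using c0 by simp
    qed
  qed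
qed

lemma descent:
  fixes g :: "'a::real_inner \<Rightarrow> real"
  assumes grad: "\<And>x. (g has_derivative (\<lambda>h. grad x \<bullet> h)) (at x)"
   and lip: "\<And>x z. norm (grad x - grad z) \<le> L * norm (x - z)"
  shows "g (x + h) \<le> g x + grad x \<bullet> h + L/2 * (norm h)^2"
proof -
  define \<phi> where "\<phi> t = g (x + t *\<^sub>R h) - t * (grad x \<bullet> h) - L/2 * t^2 * (norm h)^2" for t
  have D: "DERIV \<phi> t :> (grad (x + t *\<^sub>R h) \<bullet> h - grad x \<bullet> h - L * t * (norm h)^2)" for t
  proof -
    have "((\<lambda>t. x + t *\<^sub>R h) has_derivative (\<lambda>s. s *\<^sub>R h)) (at t)"
      by (auto intro!: derivative_eq_intros)
    from has_derivative_compose[OF this grad]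
    have "((\<lambda>t. g (x + t *\<^sub>R h)) has_derivative (\<lambda>s. grad (x + t *\<^sub>R h) \<bullet> (s *\<^sub>R h))) (at t)" .
    hence "((\<lambda>t. g (x + t *\<^sub>R h)) has_derivative (\<lambda>s. (grad (x + t *\<^sub>R h) \<bullet> h) * s)) (at t)"
      by (simp add: mult.commute)
    hence g1: "DERIV (\<lambda>t. g (x + t *\<^sub>R h)) t :> grad (x + t *\<^sub>R h) \<bullet> h"
      by (simp add: has_field_derivative_def)
    show ?thesis unfolding \<phi>_def
      by (rule derivative_eq_intros g1 | simp)+
  qed
  have "\<phi> 1 \<le> \<phi> 0"
  proof (rule DERIV_nonpos_imp_nonincreasing[of 0 1])
    fix t :: real assume t: "0 \<le> t" "t \<le> 1"
    have "grad (x + t *\<^sub>R h) \<bullet> h - grad x \<bullet> h = (grad (x + t *\<^sub>R h) - grad x) \<bullet> h"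
      by (simp add: inner_diff_left)
    also have "\<dots> \<le> norm (grad (x + t *\<^sub>R h) - grad x) * norm h" by (rule norm_cauchy_schwarz)
    also have "\<dots> \<le> L * (t * norm h) * norm h"
      using lip[of "x + t *\<^sub>R h" x] t by (intro mult_right_mono) auto
    finally have "grad (x + t *\<^sub>R h) \<bullet> h - grad x \<bullet> h - L * t * (norm h)^2 \<le> 0"
      by (simp add: power2_eq_square algebra_simps)
    thus "\<exists>y. DERIV \<phi> t :> y \<and> y \<le> 0" using D by blast
  qed simp
  thus ?thesis unfolding \<phi>_def by simp
qed


lemma grad_lin:
  fixes grad :: "real^'n \<Rightarrow> real^'n" and hess :: "real^'n \<Rightarrow> real^'n^'n"
  assumes hd: "\<And>z. z \<in> cball x0 \<beta> \<Longrightarrow> (grad has_derivative (\<lambda>h. hess z *v h)) (at z within cball x0 \<beta>)"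
   and lip: "\<And>z. z \<in> cball x0 \<beta> \<Longrightarrow> onorm (\<lambda>h. (hess z - hess x0) *v h) \<le> L2 * norm (z - x0)"
   and L2: "L2 \<ge> 0" and \<rho>: "0 \<le> \<rho>" "\<rho> \<le> \<beta>" and y: "y \<in> cball x0 \<rho>" and y': "y' \<in> cball x0 \<rho>"
  shows "norm (grad y - grad y' - hess x0 *v (y - y')) \<le> L2 * \<rho> * norm (y - y')"
proof -
  have sub: "cball x0 \<rho> \<subseteq> cball x0 \<beta>" using \<rho> by auto
  have "norm (grad y - grad y' - (\<lambda>h. hess x0 *v h) (y - y')) \<le> norm (y - y') * (L2 * \<rho>)"
  proof (rule differentiable_bound_linearization[where S="cball x0 \<rho>" and f'="\<lambda>z h. hess z *v h"])
    fix t :: real assume t: "t \<in> {0..1}"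
    have "y' + t *\<^sub>R (y - y') = (1 - t) *\<^sub>R y' + t *\<^sub>R y" by (simp add: algebra_simps)
    also have "\<dots> \<in> cball x0 \<rho>" using t y y' convex_cball[of x0 \<rho>] unfolding convex_def by auto
    finally show "y' + t *\<^sub>R (y - y') \<in> cball x0 \<rho>" .
  next
    fix z assume z: "z \<in> cball x0 \<rho>"
    show "(grad has_derivative (\<lambda>h. hess z *v h)) (at z within cball x0 \<rho>)"
      using has_derivative_subset[OF hd[of z] sub] z sub by blast
  next
    fix z assume z: "z \<in> cball x0 \<rho>"
    have "(\<lambda>h. hess z *v h) - (\<lambda>h. hess x0 *v h) = (\<lambda>h. (hess z - hess x0) *v h)"
      by (rule ext) (simp add: matrix_vector_mult_diff_rdistrib)
    moreover have "onorm (\<lambda>h. (hess z - hess x0) *v h) \<le> L2 * \<rho>"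
    proof -
      have "norm (z - x0) \<le> \<rho>" using z by (simp add: dist_norm norm_minus_commute)
      from mult_left_mono[OF this L2] show ?thesis using lip[of z] sub z by (meson order_trans subsetD)
    qed
    ultimately show "onorm ((\<lambda>h. hess z *v h) - (\<lambda>h. hess x0 *v h)) \<le> L2 * \<rho>" by simp
  next
    show "x0 \<in> cball x0 \<rho>" using \<rho> by simp
  qed
  thus ?thesis by (simp add: mult.commute)
qed

lemma second_diff:
  fixes g :: "real^'n \<Rightarrow> real" and grad :: "real^'n \<Rightarrow> real^'n" and hess :: "real^'n \<Rightarrow> real^'n^'n"
  assumes grad: "\<And>x. (g has_derivative (\<lambda>h. grad x \<bullet> h)) (at x)"
   and hd: "\<And>z. z \<in> cball x0 \<beta> \<Longrightarrow> (grad has_derivative (\<lambda>h. hess z *v h)) (at z within cball x0 \<beta>)"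
   and lip: "\<And>z. z \<in> cball x0 \<beta> \<Longrightarrow> onorm (\<lambda>h. (hess z - hess x0) *v h) \<le> L2 * norm (z - x0)"
   and L2: "L2 \<ge> 0" and r: "0 \<le> r" "2 * r \<le> \<beta>" and p: "norm p \<le> r" and q: "norm q \<le> r"
  shows "\<bar>g (x0 + p + q) - g (x0 + p) - g (x0 + q) + g x0 - (hess x0 *v q) \<bullet> p\<bar> \<le> L2 * (2 * r) * norm q * norm p"
proof -
  define \<psi> where "\<psi> z = g (z + q) - g z - (hess x0 *v q) \<bullet> z" for z
  have der: "(\<psi> has_derivative (\<lambda>v. (grad (z + q) - grad z - hess x0 *v q) \<bullet> v)) (at z within cball x0 r)" for z
  proof -
    have "((\<lambda>z. z + q) has_derivative (\<lambda>v. v)) (at z)" by (auto intro!: derivative_eq_intros)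
    from has_derivative_compose[OF this grad]
    have a: "((\<lambda>z. g (z + q)) has_derivative (\<lambda>v. grad (z + q) \<bullet> v)) (at z)" .
    have b: "((\<lambda>z. (hess x0 *v q) \<bullet> z) has_derivative (\<lambda>v. (hess x0 *v q) \<bullet> v)) (at z)"
      by (auto intro!: derivative_eq_intros)
    have "(\<psi> has_derivative (\<lambda>v. grad (z + q) \<bullet> v - grad z \<bullet> v - (hess x0 *v q) \<bullet> v)) (at z)"
      unfolding \<psi>_def by (intro has_derivative_diff a b grad)
    hence "(\<psi> has_derivative (\<lambda>v. (grad (z + q) - grad z - hess x0 *v q) \<bullet> v)) (at z)"
      by (simp add: inner_diff_left)
    thus ?thesis by (rule has_derivative_at_withinI)
  qed
  have B: "onorm (\<lambda>v. (grad (z + q) - grad z - hess x0 *v q) \<bullet> v) \<le> L2 * (2 * r) * norm q"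
    if z: "z \<in> cball x0 r" for z
  proof -
    have z1: "z \<in> cball x0 (2 * r)" using z r by auto
    have z2: "z + q \<in> cball x0 (2 * r)"
    proof -
      have e: "z + q - x0 = (z - x0) + q" by simp
      have "norm (z + q - x0) \<le> norm (z - x0) + norm q" unfolding e by (rule norm_triangle_ineq)
      moreover have "norm (z - x0) \<le> r" using z by (simp add: dist_norm norm_minus_commute)
      ultimately show ?thesis using q by (simp add: dist_norm norm_minus_commute)
    qed
    have "norm (grad (z + q) - grad z - hess x0 *v ((z + q) - z)) \<le> L2 * (2 * r) * norm ((z + q) - z)"
      by (rule grad_lin[OF hd lip L2 _ r(2) z2 z1]) (use r in auto)
    hence n: "norm (grad (z + q) - grad z - hess x0 *v q) \<le> L2 * (2 * r) * norm q" by simp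
    show ?thesis
    proof (rule onorm_le)
      fix v
      have "norm ((grad (z + q) - grad z - hess x0 *v q) \<bullet> v) \<le> norm (grad (z + q) - grad z - hess x0 *v q) * norm v"
        by (simp add: Cauchy_Schwarz_ineq2)
      also have "\<dots> \<le> L2 * (2 * r) * norm q * norm v" using n by (simp add: mult_right_mono)
      finally show "norm ((grad (z + q) - grad z - hess x0 *v q) \<bullet> v) \<le> L2 * (2 * r) * norm q * norm v" .
    qed
  qed
  have "norm (\<psi> (x0 + p) - \<psi> x0) \<le> L2 * (2 * r) * norm q * norm ((x0 + p) - x0)"
  proof -
    have m1: "x0 + p \<in> cball x0 r" using p by (simp add: dist_norm)
    have m2: "x0 \<in> cball x0 r" using r by simp
    show ?thesis by (rule differentiable_bound[OF convex_cball _ B m1 m2]) (rule der)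
  qed
  moreover have "\<psi> (x0 + p) - \<psi> x0 = g (x0 + p + q) - g (x0 + p) - g (x0 + q) + g x0 - (hess x0 *v q) \<bullet> p"
    unfolding \<psi>_def by (simp add: inner_add_right algebra_simps)
  ultimately show ?thesis by simp
qed


lemma small_nonpos:
  fixes D K c :: real
  assumes c: "c > 0" and K: "K \<ge> 0" and h: "\<And>t. 0 < t \<Longrightarrow> t \<le> c \<Longrightarrow> D \<le> K * t"
  shows "D \<le> 0"
proof (rule ccontr)
  assume "\<not> D \<le> 0"
  hence D: "D > 0" by simp
  define t where "t = min c (D / (2 * (K + 1)))"
  have t0: "t > 0" using c D K by (simp add: t_def)
  have "D \<le> K * t" using h[OF t0] by (simp add: t_def)
  also have "\<dots> \<le> K * (D / (2 * (K + 1)))" using K by (intro mult_left_mono) (auto simp: t_def)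
  also have "\<dots> < D" using D K by (simp add: field_simps) (smt (verit) mult_nonneg_nonneg)
  finally show False by simp
qed

lemma hess_sym:
  fixes g :: "real^'n \<Rightarrow> real" and grad :: "real^'n \<Rightarrow> real^'n" and hess :: "real^'n \<Rightarrow> real^'n^'n"
  assumes grad: "\<And>x. (g has_derivative (\<lambda>h. grad x \<bullet> h)) (at x)"
   and hd: "\<And>z. z \<in> cball x0 \<beta> \<Longrightarrow> (grad has_derivative (\<lambda>h. hess z *v h)) (at z within cball x0 \<beta>)"
   and lip: "\<And>z. z \<in> cball x0 \<beta> \<Longrightarrow> onorm (\<lambda>h. (hess z - hess x0) *v h) \<le> L2 * norm (z - x0)"
   and L2: "L2 \<ge> 0" and \<beta>: "\<beta> > 0"
  shows "(hess x0 *v k) \<bullet> h = (hess x0 *v h) \<bullet> k"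
proof -
  define m where "m = norm h + norm k + 1"
  have m0: "m > 0" by (simp add: m_def add_nonneg_pos)
  define D where "D = \<bar>(hess x0 *v k) \<bullet> h - (hess x0 *v h) \<bullet> k\<bar>"
  have "D \<le> 0"
  proof (rule small_nonpos[where c="\<beta> / (2 * m)" and K="4 * L2 * m * norm h * norm k"])
    show "\<beta> / (2 * m) > 0" using \<beta> m0 by simp
    show "4 * L2 * m * norm h * norm k \<ge> 0" using L2 m0 by simp
    fix t :: real assume t0: "0 < t" and tc: "t \<le> \<beta> / (2 * m)"
    define r where "r = t * m"
    have r0: "0 \<le> r" using t0 m0 by (simp add: r_def)
    have r2: "2 * r \<le> \<beta>" using tc m0 by (simp add: r_def field_simps)
    have ph: "norm (t *\<^sub>R h) \<le> r" using t0 by (simp add: r_def m_def)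
    have pk: "norm (t *\<^sub>R k) \<le> r" using t0 by (simp add: r_def m_def)
    note s1 = second_diff[OF grad hd lip L2 r0 r2 ph pk]
    note s2 = second_diff[OF grad hd lip L2 r0 r2 pk ph]
    have lin: "hess x0 *v (t *\<^sub>R v) = t *\<^sub>R (hess x0 *v v)" for v
      by (rule linear_scale[OF matrix_vector_mul_linear])
    have e1: "(hess x0 *v (t *\<^sub>R k)) \<bullet> (t *\<^sub>R h) = t^2 * ((hess x0 *v k) \<bullet> h)"
      by (simp add: lin power2_eq_square)
    have e2: "(hess x0 *v (t *\<^sub>R h)) \<bullet> (t *\<^sub>R k) = t^2 * ((hess x0 *v h) \<bullet> k)"
      by (simp add: lin power2_eq_square)
    have sw: "x0 + t *\<^sub>R h + t *\<^sub>R k = x0 + t *\<^sub>R k + t *\<^sub>R h" by (simp add: algebra_simps)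
    have nn: "norm (t *\<^sub>R k) * norm (t *\<^sub>R h) = t^2 * (norm h * norm k)"
      using t0 by (simp add: power2_eq_square)
    define X where "X = g (x0 + t *\<^sub>R h + t *\<^sub>R k) - g (x0 + t *\<^sub>R h) - g (x0 + t *\<^sub>R k) + g x0"
    define E where "E = L2 * (2 * r) * (t^2 * (norm h * norm k))"
    have a1: "\<bar>X - t^2 * ((hess x0 *v k) \<bullet> h)\<bar> \<le> E"
      using s1 unfolding e1 X_def E_def nn[symmetric] by (simp add: mult.assoc)
    have a2: "\<bar>X - t^2 * ((hess x0 *v h) \<bullet> k)\<bar> \<le> E"
    proof -
      have nn2: "norm (t *\<^sub>R h) * norm (t *\<^sub>R k) = t^2 * (norm h * norm k)"
        using t0 by (simp add: power2_eq_square)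
      have "\<bar>X - t^2 * ((hess x0 *v h) \<bullet> k)\<bar> = \<bar>g (x0 + t *\<^sub>R k + t *\<^sub>R h) - g (x0 + t *\<^sub>R k) - g (x0 + t *\<^sub>R h) + g x0 - (hess x0 *v (t *\<^sub>R h)) \<bullet> (t *\<^sub>R k)\<bar>"
        unfolding X_def e2 sw by simp
      also have "\<dots> \<le> L2 * (2 * r) * norm (t *\<^sub>R h) * norm (t *\<^sub>R k)" by (rule s2)
      also have "\<dots> = E" unfolding E_def using nn2 by (simp add: mult.assoc)
      finally show ?thesis .
    qed
    have "t^2 * D = \<bar>t^2 * ((hess x0 *v k) \<bullet> h) - t^2 * ((hess x0 *v h) \<bullet> k)\<bar>"
      by (simp only: D_def right_diff_distrib[symmetric] abs_mult abs_of_nonneg[OF zero_le_power2])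
    also have "\<dots> \<le> 2 * E" using a1 a2 by linarith
    finally have "t^2 * D \<le> 2 * (L2 * (2 * r) * (t^2 * (norm h * norm k)))" by (simp add: E_def)
    also have "\<dots> = t^2 * (4 * L2 * m * norm h * norm k * t)" by (simp add: r_def power2_eq_square)
    finally show "D \<le> 4 * L2 * m * norm h * norm k * t" using t0 by simp
  qed
  thus ?thesis by (simp add: D_def)
qed


lemma quad_expand:
  fixes B :: "real^'n^'n"
  assumes sym: "\<And>u v. (B *v u) \<bullet> v = (B *v v) \<bullet> u"
  shows "(u - t *\<^sub>R v) \<bullet> (B *v (u - t *\<^sub>R v)) = u \<bullet> (B *v u) - 2 * t * (v \<bullet> (B *v u)) + t^2 * (v \<bullet> (B *v v))"
proof -
  have lin: "B *v (t *\<^sub>R w) = t *\<^sub>R (B *v w)" for w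
    by (rule linear_scale[OF matrix_vector_mul_linear])
  have s: "u \<bullet> (B *v v) = v \<bullet> (B *v u)" using sym[of v u] by (simp add: inner_commute)
  show ?thesis
    by (simp add: matrix_vector_mult_diff_distrib lin inner_diff_left inner_diff_right s power2_eq_square algebra_simps)
qed

lemma psd_cs:
  fixes B :: "real^'n^'n"
  assumes sym: "\<And>u v. (B *v u) \<bullet> v = (B *v v) \<bullet> u"
   and psd: "\<And>u. u \<bullet> (B *v u) \<ge> 0" and bnd: "\<And>u. norm (B *v u) \<le> K * norm u" and K: "K > 0"
  shows "(norm (B *v u))^2 \<le> K * (u \<bullet> (B *v u))"
proof -
  define y where "y = B *v u"
  have "0 \<le> (u - (1/K) *\<^sub>R y) \<bullet> (B *v (u - (1/K) *\<^sub>R y))" by (rule psd)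
  also have "\<dots> = u \<bullet> (B *v u) - 2 * (1/K) * (y \<bullet> (B *v u)) + (1/K)^2 * (y \<bullet> (B *v y))"
    by (rule quad_expand[OF sym])
  finally have 1: "0 \<le> u \<bullet> (B *v u) - 2 * (1/K) * (norm y)^2 + (1/K)^2 * (y \<bullet> (B *v y))"
    by (simp add: y_def power2_norm_eq_inner)
  have "y \<bullet> (B *v y) \<le> norm y * norm (B *v y)" by (rule norm_cauchy_schwarz)
  also have "\<dots> \<le> norm y * (K * norm y)" by (rule mult_left_mono[OF bnd]) simp
  finally have 2: "y \<bullet> (B *v y) \<le> K * (norm y)^2" by (simp add: power2_eq_square algebra_simps)
  have "(1/K)^2 * (y \<bullet> (B *v y)) \<le> (1/K)^2 * (K * (norm y)^2)" by (rule mult_left_mono[OF 2]) simp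
  also have "\<dots> = (1/K) * (norm y)^2" using K by (simp add: power2_eq_square)
  finally have "0 \<le> u \<bullet> (B *v u) - (1/K) * (norm y)^2" using 1 by simp
  hence "(1/K) * (norm y)^2 \<le> u \<bullet> (B *v u)" by simp
  thus ?thesis using K by (simp add: y_def pos_divide_le_eq mult.commute)
qed

lemma rayleigh:
  fixes H :: "real^'n^'n"
  assumes sym: "\<And>u v. (H *v u) \<bullet> v = (H *v v) \<bullet> u"
    and bdd: "bdd_below (real_eigenvalues H)"
  shows "x \<bullet> (H *v x) \<ge> lambda_min H * (norm x)^2"
proof -
  define f where "f u = u \<bullet> (H *v u)" for u :: "real^'n"
  have cont: "continuous_on (sphere 0 1) f" unfolding f_def
    by (intro continuous_intros linear_continuous_on matrix_vector_mul_bounded_linear)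
  obtain e :: "real^'n" where "norm e = 1" using vector_choose_size[of 1] by auto
  hence ne: "sphere (0::real^'n) 1 \<noteq> {}" by auto
  obtain xs where xs: "xs \<in> sphere 0 1" and xmin: "\<And>y. y \<in> sphere 0 1 \<Longrightarrow> f xs \<le> f y"
    using continuous_attains_inf[OF compact_sphere ne cont] by blast
  define \<mu> where "\<mu> = f xs"
  define B where "B = H - \<mu> *\<^sub>R mat 1"
  have Bv: "B *v u = H *v u - \<mu> *\<^sub>R u" for u
  proof -
    have "(\<mu> *\<^sub>R mat 1) *v u = \<mu> *\<^sub>R u"
      by (metis scaleR_matrix_vector_assoc matrix_vector_mul_lid)
    thus ?thesis by (simp add: B_def matrix_vector_mult_diff_rdistrib)
  qed
  have symB: "(B *v u) \<bullet> v = (B *v v) \<bullet> u" for u v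
    using sym[of u v] by (simp add: Bv inner_diff_left inner_diff_right inner_commute)
  have xs1: "norm xs = 1" using xs by simp
  have psd0: "\<mu> * (norm u)^2 \<le> f u" for u
  proof (cases "u = 0")
    case True thus ?thesis by (simp add: f_def)
  next
    case False
    define w where "w = (1 / norm u) *\<^sub>R u"
    have "w \<in> sphere 0 1" using False by (simp add: w_def)
    hence "\<mu> \<le> f w" using xmin by (simp add: \<mu>_def)
    also have "f w = f u / (norm u)^2"
      by (simp add: f_def w_def linear_scale[OF matrix_vector_mul_linear] power2_eq_square)
    finally show ?thesis using False by (simp add: field_simps)
  qed
  have psd: "u \<bullet> (B *v u) \<ge> 0" for u
    using psd0[of u] by (simp add: Bv f_def inner_diff_right power2_norm_eq_inner)
  have q0: "xs \<bullet> (B *v xs) = 0"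
    using xs1 by (simp add: Bv f_def \<mu>_def inner_diff_right power2_norm_eq_inner[symmetric])
  define y where "y = B *v xs"
  have "(norm y)^2 \<le> 0"
  proof (rule small_nonpos[where c=1 and K="(\<bar>y \<bullet> (B *v y)\<bar>)/2 + 1"])
    fix t :: real assume t: "0 < t" "t \<le> 1"
    have "0 \<le> (xs - t *\<^sub>R y) \<bullet> (B *v (xs - t *\<^sub>R y))" by (rule psd)
    also have "\<dots> = - 2 * t * (norm y)^2 + t^2 * (y \<bullet> (B *v y))"
      by (simp add: quad_expand[OF symB] q0 y_def power2_norm_eq_inner)
    finally have "2 * t * (norm y)^2 \<le> t * (t * (y \<bullet> (B *v y)))" by (simp add: power2_eq_square)
    hence "2 * (norm y)^2 \<le> t * (y \<bullet> (B *v y))" using t by simp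
    also have "\<dots> \<le> t * \<bar>y \<bullet> (B *v y)\<bar>" using t by (intro mult_left_mono) auto
    finally show "(norm y)^2 \<le> ((\<bar>y \<bullet> (B *v y)\<bar>)/2 + 1) * t" using t by (simp add: algebra_simps)
  qed auto
  hence "y = 0" by simp
  hence eig: "H *v xs = \<mu> *\<^sub>R xs" by (simp add: y_def Bv)
  have "xs \<noteq> 0" using xs1 by auto
  hence "\<mu> \<in> real_eigenvalues H" using eig by (auto simp: real_eigenvalues_def)
  hence "lambda_min H \<le> \<mu>" unfolding lambda_min_def by (rule cInf_lower[OF _ bdd])
  hence "lambda_min H * (norm x)^2 \<le> \<mu> * (norm x)^2" by (simp add: mult_right_mono)
  also have "\<dots> \<le> x \<bullet> (H *v x)" using psd0[of x] by (simp add: f_def)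
  finally show ?thesis .
qed


lemma norm_comb_sq:
  fixes u v :: "'a::real_inner"
  shows "(norm (a *\<^sub>R u - b *\<^sub>R v))^2 = a^2 * (norm u)^2 - 2 * a * b * (u \<bullet> v) + b^2 * (norm v)^2"
proof -
  have "(norm (a *\<^sub>R u - b *\<^sub>R v))^2 = (a *\<^sub>R u - b *\<^sub>R v) \<bullet> (a *\<^sub>R u - b *\<^sub>R v)" by (rule power2_norm_eq_inner)
  also have "\<dots> = a * a * (u \<bullet> u) - a * b * (u \<bullet> v) - b * a * (v \<bullet> u) + b * b * (v \<bullet> v)"
    by (simp add: inner_diff_left inner_diff_right algebra_simps)
  also have "\<dots> = a^2 * (norm u)^2 - 2 * a * b * (u \<bullet> v) + b^2 * (norm v)^2"
    by (simp only: power2_norm_eq_inner inner_commute[of v u]) (simp add: power2_eq_square)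
  finally show ?thesis .
qed

lemma contraction:
  fixes H :: "real^'n^'n"
  assumes sym: "\<And>u v. (H *v u) \<bullet> v = (H *v v) \<bullet> u"
    and bdd: "bdd_below (real_eigenvalues H)"
    and bnd: "\<And>u. norm (H *v u) \<le> L * norm u" and L: "L > 0"
    and lam: "lambda_min H \<le> 0" "- L \<le> lambda_min H"
    and eta: "0 \<le> \<eta>" "\<eta> * L \<le> 1"
  shows "norm (x - \<eta> *\<^sub>R (H *v x)) \<le> (1 - \<eta> * lambda_min H) * norm x"
proof -
  define lm where "lm = lambda_min H"
  define A where "A = H - lm *\<^sub>R mat 1"
  have Av: "A *v u = H *v u - lm *\<^sub>R u" for u
  proof -
    have "(lm *\<^sub>R mat 1) *v u = lm *\<^sub>R u"
      by (metis scaleR_matrix_vector_assoc matrix_vector_mul_lid)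
    thus ?thesis by (simp add: A_def matrix_vector_mult_diff_rdistrib)
  qed
  have symA: "(A *v u) \<bullet> v = (A *v v) \<bullet> u" for u v
    using sym[of u v] by (simp add: Av inner_diff_left inner_diff_right inner_commute)
  have psd: "u \<bullet> (A *v u) \<ge> 0" for u
    using rayleigh[OF sym bdd, of u] by (simp add: Av lm_def inner_diff_right power2_norm_eq_inner)
  have bndA: "norm (A *v u) \<le> (2 * L) * norm u" for u
  proof -
    have "norm (A *v u) \<le> norm (H *v u) + norm (lm *\<^sub>R u)" unfolding Av by (rule norm_triangle_ineq4)
    also have "\<dots> \<le> L * norm u + L * norm u"
    proof -
      have "- lm * norm u \<le> L * norm u" using lam by (intro mult_right_mono) (auto simp: lm_def)
      thus ?thesis using bnd[of u] lam by (simp add: lm_def)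
    qed
    finally show ?thesis by simp
  qed
  have cs: "(norm (A *v x))^2 \<le> (2 * L) * (x \<bullet> (A *v x))"
    by (rule psd_cs[OF symA psd bndA]) (use L in simp)
  define c where "c = 1 - \<eta> * lm"
  have c1: "c \<ge> 1" using lam eta by (simp add: c_def lm_def mult_nonneg_nonpos)
  have eq: "x - \<eta> *\<^sub>R (H *v x) = c *\<^sub>R x - \<eta> *\<^sub>R (A *v x)"
    by (simp add: Av c_def algebra_simps)
  define p where "p = x \<bullet> (A *v x)"
  have p0: "p \<ge> 0" using psd by (simp add: p_def)
  have "(norm (c *\<^sub>R x - \<eta> *\<^sub>R (A *v x)))^2 = c^2 * (norm x)^2 - 2 * c * \<eta> * p + \<eta>^2 * (norm (A *v x))^2"
    unfolding p_def norm_comb_sq by simp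
  also have "\<dots> \<le> c^2 * (norm x)^2 - 2 * c * \<eta> * p + \<eta>^2 * ((2 * L) * p)"
    using cs eta by (intro add_left_mono mult_left_mono) (auto simp: p_def)
  also have "\<dots> = c^2 * (norm x)^2 - 2 * \<eta> * p * (c - \<eta> * L)" by (simp add: power2_eq_square algebra_simps)
  also have "\<dots> \<le> c^2 * (norm x)^2"
  proof -
    have "0 \<le> c - \<eta> * L" using eta c1 by linarith
    hence "0 \<le> 2 * \<eta> * p * (c - \<eta> * L)" using p0 eta by (intro mult_nonneg_nonneg) auto
    thus ?thesis by linarith
  qed
  finally have sq: "(norm (c *\<^sub>R x - \<eta> *\<^sub>R (A *v x)))^2 \<le> (c * norm x)^2" by (simp add: power_mult_distrib)
  have cx: "0 \<le> c * norm x" using c1 by simp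
  have "norm (c *\<^sub>R x - \<eta> *\<^sub>R (A *v x)) \<le> c * norm x"
    by (rule power2_le_imp_le[OF sq cx])
  thus ?thesis unfolding eq by (simp add: c_def lm_def)
qed



lemma poly_core:
  fixes n b a E k :: real
  assumes n: "n \<ge> 0" and b: "b \<ge> 0" and a: "0 \<le> a" "a \<le> 1/20" and E: "E \<ge> 0" "E \<le> a * n + b"
    and k: "k = (1 - a) / (1 + a)^2"
  shows "(- (n^2)) + n * E + k/2 * (n + E)^2 \<le> 5 * b^2 - n^2/5"
proof -
  have k0: "k \<ge> 0" using a by (simp add: k)
  have kk: "k * (1 + a)^2 = 1 - a" using a by (simp add: k)
  have k1: "k * (1 + a) \<le> 1"
  proof -
    have "k * (1 + a) = (1 - a) / (1 + a)" using a by (simp add: k power2_eq_square)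
    also have "\<dots> \<le> 1" using a by simp
    finally show ?thesis .
  qed
  have k2: "k \<le> 1"
  proof -
    have "0 \<le> k * a" using k0 a by simp
    hence "k \<le> k * (1 + a)" by (simp add: algebra_simps)
    thus ?thesis using k1 by simp
  qed
  have "n * E \<le> n * (a * n + b)" using n E by (simp add: mult_left_mono)
  moreover have "(n + E)^2 \<le> ((1 + a) * n + b)^2" using n E by (intro power_mono) (auto simp: algebra_simps)
  hence "k/2 * (n + E)^2 \<le> k/2 * ((1 + a) * n + b)^2" using k0 by (intro mult_left_mono) auto
  ultimately have 1: "(- (n^2)) + n * E + k/2 * (n + E)^2 \<le> (- (n^2)) + n * (a * n + b) + k/2 * ((1 + a) * n + b)^2"
    by linarith
  have "k/2 * ((1 + a) * n + b)^2 = (k * (1 + a)^2) / 2 * n^2 + (k * (1 + a)) * n * b + k/2 * b^2"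
    by (simp add: power2_eq_square algebra_simps)
  also have "\<dots> \<le> (1 - a) / 2 * n^2 + n * b + 1/2 * b^2"
  proof -
    have "(k * (1 + a)) * n * b \<le> 1 * n * b" using k1 n b by (intro mult_right_mono) auto
    moreover have "k/2 * b^2 \<le> 1/2 * b^2" using k2 by (intro mult_right_mono) auto
    ultimately show ?thesis using kk by simp
  qed
  finally have 2: "k/2 * ((1 + a) * n + b)^2 \<le> (1 - a) / 2 * n^2 + n * b + 1/2 * b^2" .
  have 3: "0 \<le> 11/40 * n^2 - 2 * (n * b) + 9/2 * b^2"
  proof -
    have "0 \<le> 11/40 * (n - 40/11 * b)^2 + (9/2 - 40/11) * b^2" using b by simp
    also have "\<dots> = 11/40 * n^2 - 2 * (n * b) + 9/2 * b^2" by (simp add: power2_eq_square algebra_simps)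
    finally show ?thesis .
  qed
  have 4: "a * n^2 \<le> 1/20 * n^2" using a by (intro mult_right_mono) auto
  have 1: "(- (n^2)) + n * E + k/2 * (n + E)^2 \<le> (- (n^2)) + a * n^2 + n * b + k/2 * ((1 + a) * n + b)^2"
    using 1 by (simp add: power2_eq_square algebra_simps)
  have 2: "k/2 * ((1 + a) * n + b)^2 \<le> 1/2 * n^2 - 1/2 * (a * n^2) + n * b + 1/2 * b^2"
  proof -
    have eq: "(1 - a)/2 * n^2 = 1/2*n^2 - 1/2*(a*n^2)" by (simp add: field_simps)
    show ?thesis using 2 eq by linarith
  qed
  show ?thesis using 1 2 3 4 by linarith
qed

lemma step_descent_num:
  fixes v G :: "'a::real_inner"
  assumes err: "norm (v - G) \<le> a * norm v + b" and a: "0 \<le> a" "a \<le> 1/20" and b: "0 \<le> b"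
    and L1: "L1 > 0" and \<eta>: "\<eta> = (1 - a) / ((1 + a)^2 * L1)"
  shows "v \<bullet> (- \<eta> *\<^sub>R G) + L1/2 * (norm (\<eta> *\<^sub>R G))^2 \<le> \<eta> * (5 * b^2 - (norm v)^2/5)"
proof -
  define e where "e = v - G"
  define n where "n = norm v"
  have G: "G = v - e" by (simp add: e_def)
  have \<eta>0: "\<eta> \<ge> 0" using a L1 by (simp add: \<eta>)
  have "v \<bullet> G = n^2 - v \<bullet> e" by (simp add: G n_def inner_diff_right power2_norm_eq_inner)
  moreover have "v \<bullet> e \<le> n * norm e" using norm_cauchy_schwarz[of v e] by (simp add: n_def)
  ultimately have vG: "v \<bullet> G \<ge> n^2 - n * norm e" by simp
  have nG: "norm G \<le> n + norm e" unfolding G n_def by (rule norm_triangle_ineq4)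
  have k: "L1 * \<eta> = (1 - a) / (1 + a)^2" using L1 by (simp add: \<eta>)
  have "v \<bullet> (- \<eta> *\<^sub>R G) + L1/2 * (norm (\<eta> *\<^sub>R G))^2 = \<eta> * (- (v \<bullet> G) + (L1 * \<eta>)/2 * (norm G)^2)"
    using \<eta>0 by (simp add: power2_eq_square algebra_simps)
  also have "\<dots> \<le> \<eta> * ((- (n^2)) + n * norm e + (L1 * \<eta>)/2 * (n + norm e)^2)"
  proof -
    have A: "- (v \<bullet> G) \<le> (- (n^2)) + n * norm e" using vG by simp
    have "(norm G)^2 \<le> (n + norm e)^2" using nG by (intro power_mono) auto
    hence B: "(L1 * \<eta>)/2 * (norm G)^2 \<le> (L1 * \<eta>)/2 * (n + norm e)^2"
      using \<eta>0 L1 by (intro mult_left_mono) auto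
    show ?thesis by (intro mult_left_mono \<eta>0) (use A B in linarith)
  qed
  also have "\<dots> \<le> \<eta> * (5 * b^2 - n^2/5)"
    by (intro mult_left_mono \<eta>0 poly_core[OF _ b a _ _ k]) (use err in \<open>auto simp: n_def e_def\<close>)
  finally show ?thesis by (simp add: n_def)
qed

lemma two_powr_le: assumes "0 \<le> x" "x \<le> 1" shows "2 powr x \<le> 1 + (x::real)"
proof -
  have "exp ((1 - x) * 0 + x * ln 2) \<le> (1 - x) * exp 0 + x * exp (ln 2)"
    using convex_onD[OF exp_convex, of x 0 "ln 2"] assms by simp
  thus ?thesis by (simp add: powr_def mult.commute)
qed



lemma localize:
  fixes z :: "nat \<Rightarrow> 'v::real_normed_vector" and n gz :: "nat \<Rightarrow> real"
  assumes desc: "\<And>t. gz (Suc t) \<le> gz t + \<eta> * (5 * b^2 - (n t)^2 / 5)"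
    and step: "\<And>t. norm (z (Suc t) - z t) \<le> \<eta> * ((1 + a) * n t + b)"
    and n0: "\<And>t. n t \<ge> 0"
    and hyp: "gz M - gz 0 > - F"
    and \<eta>: "\<eta> > 0" and a: "0 \<le> a" "a \<le> 1/20" and b: "b \<ge> 0" and T: "T = \<eta> * real M"
    and R: "R > 0" and F: "F \<le> R^2 / (50 * T)" and bF: "b^2 \<le> F / (40 * T)" and Tb: "T * b \<le> R / 4"
    and T0: "T > 0" and t: "t \<le> M"
  shows "norm (z t - z 0) \<le> 17/25 * R"
proof -
  define S2 where "S2 = (\<Sum>s<M. (n s)^2)"
  define S1 where "S1 = (\<Sum>s<M. n s)"
  have "gz M - gz 0 = (\<Sum>s<M. gz (Suc s) - gz s)" by (simp add: sum_lessThan_telescope)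
  also have "\<dots> \<le> (\<Sum>s<M. \<eta> * (5 * b^2 - (n s)^2 / 5))" by (rule sum_mono) (use desc in \<open>smt (verit)\<close>)
  also have "\<dots> = 5 * b^2 * (\<eta> * real M) - \<eta> / 5 * S2"
    by (simp add: S2_def sum_subtractf sum_distrib_left algebra_simps sum_divide_distrib)
  finally have "- F < 5 * b^2 * T - \<eta> / 5 * S2" using hyp T by simp
  moreover have "5 * b^2 * T \<le> F / 8"
  proof -
    have "5 * b^2 * T \<le> 5 * (F / (40 * T)) * T" using bF T0 by (intro mult_right_mono) auto
    also have "\<dots> = F / 8" using T0 by simp
    finally show ?thesis .
  qed
  moreover have "0 \<le> 5 * b^2 * T" using T0 by simp
  ultimately have S2b: "\<eta> * S2 \<le> 6 * F" by linarith
  define c where "c = R / (5 * T)"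
  have c0: "c > 0" using R T0 by (simp add: c_def)
  have nc: "n s \<le> (n s)^2 / (2 * c) + c / 2" for s
  proof -
    have "0 \<le> (n s - c)^2" by simp
    hence "2 * c * n s \<le> (n s)^2 + c^2" by (simp add: power2_eq_square algebra_simps)
    thus ?thesis using c0 by (simp add: field_simps power2_eq_square)
  qed
  have S1b: "S1 \<le> S2 / (2 * c) + real M * c / 2"
  proof -
    have "S1 \<le> (\<Sum>s<M. (n s)^2 / (2 * c) + c / 2)" unfolding S1_def by (intro sum_mono nc)
    also have "\<dots> = S2 / (2 * c) + real M * c / 2" by (simp add: S2_def sum.distrib sum_divide_distrib)
    finally show ?thesis .
  qed
  have "norm (z t - z 0) = norm (\<Sum>s<t. z (Suc s) - z s)" by (simp add: sum_lessThan_telescope)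
  also have "\<dots> \<le> (\<Sum>s<t. norm (z (Suc s) - z s))" by (rule norm_sum)
  also have "\<dots> \<le> (\<Sum>s<M. norm (z (Suc s) - z s))" using t by (intro sum_mono2) auto
  also have "\<dots> \<le> (\<Sum>s<M. \<eta> * ((1 + a) * n s + b))" by (intro sum_mono step)
  also have "\<dots> = \<eta> * (1 + a) * S1 + T * b" by (simp add: S1_def T sum.distrib sum_distrib_left algebra_simps)
  also have "\<dots> \<le> 21/50 * R + R / 4"
  proof -
    have "\<eta> * S1 \<le> \<eta> * (S2 / (2 * c) + real M * c / 2)" using S1b \<eta> by (simp add: mult_left_mono)
    also have "\<dots> = (\<eta> * S2) / (2 * c) + T * c / 2" by (simp add: T algebra_simps)
    also have "\<dots> \<le> (6 * F) / (2 * c) + T * c / 2" by (intro add_right_mono divide_right_mono S2b) (use c0 in simp)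
    also have "\<dots> = 15 * F * T / R + R / 10" using T0 R by (simp add: c_def field_simps)
    also have "\<dots> \<le> 15 * (R^2 / (50 * T)) * T / R + R / 10"
    proof -
      have "15 * F * T / R \<le> 15 * (R^2 / (50 * T)) * T / R"
        by (intro divide_right_mono mult_right_mono mult_left_mono F) (use T0 R in auto)
      thus ?thesis by simp
    qed
    also have "\<dots> = 2/5 * R" using T0 R by (simp add: field_simps power2_eq_square)
    finally have e1: "\<eta> * S1 \<le> 2/5 * R" .
    have "\<eta> * (1 + a) * S1 = (1 + a) * (\<eta> * S1)" by simp
    also have "\<dots> \<le> (21/20) * (2/5 * R)"
    proof (rule mult_mono)
      show "0 \<le> \<eta> * S1" unfolding S1_def using \<eta> n0 by (intro mult_nonneg_nonneg sum_nonneg) (auto simp: less_imp_le)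
    qed (use e1 a R in auto)
    finally show ?thesis using Tb by simp
  qed
  also have "\<dots> \<le> 17/25 * R" using R by simp
  finally show ?thesis .
qed

lemma coupling:
  fixes w :: "nat \<Rightarrow> 'v::real_inner" and e0 :: 'v
  assumes wa: "\<And>t. t < M \<Longrightarrow> norm (w (Suc t)) \<le> (q + \<epsilon>) * norm (w t) + \<Xi>"
    and wb: "\<And>t. t < M \<Longrightarrow> e0 \<bullet> w (Suc t) \<ge> q * (e0 \<bullet> w t) - \<epsilon> * norm (w t) - \<Xi>"
    and w0: "w 0 = U *\<^sub>R e0" and e0: "norm e0 = 1" and q: "q \<ge> 1" and \<epsilon>: "\<epsilon> \<ge> 0" and \<Xi>: "\<Xi> \<ge> 0"
    and U: "U > 0" and M\<epsilon>: "real M * \<epsilon> \<le> 1/4" and M\<Xi>: "real M * \<Xi> \<le> 3/16 * U"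
  shows "e0 \<bullet> w M \<ge> 1/3 * q^M * U"
proof -
  have W1: "t \<le> M \<Longrightarrow> norm (w t) \<le> (q + \<epsilon>)^t * (U + real t * \<Xi>)" for t
  proof (induction t)
    case 0 thus ?case using w0 e0 U by simp
  next
    case (Suc t)
    hence tM: "t < M" by simp
    have p1: "(q + \<epsilon>)^(Suc t) \<ge> 1" using q \<epsilon> by (intro one_le_power) auto
    have "norm (w (Suc t)) \<le> (q + \<epsilon>) * norm (w t) + \<Xi>" by (rule wa[OF tM])
    also have "\<dots> \<le> (q + \<epsilon>) * ((q + \<epsilon>)^t * (U + real t * \<Xi>)) + \<Xi>"
      using Suc q \<epsilon> by (intro add_right_mono mult_left_mono) auto
    also have "\<dots> \<le> (q + \<epsilon>)^(Suc t) * (U + real t * \<Xi>) + (q + \<epsilon>)^(Suc t) * \<Xi>"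
      using p1 \<Xi> by (simp add: mult_le_cancel_right1)
    also have "\<dots> = (q + \<epsilon>)^(Suc t) * (U + real (Suc t) * \<Xi>)" by (simp add: algebra_simps)
    finally show ?case .
  qed
  have e14: "exp (1/4 :: real) \<le> 3/2"
    using exp_bound_lemma[of "1/4 :: real"] by simp
  have W2: "(q + \<epsilon>)^t \<le> q^t * (3/2)" if t: "t \<le> M" for t
  proof -
    have "(q + \<epsilon>)^t \<le> (q * (1 + \<epsilon>))^t"
    proof (rule power_mono)
      have "\<epsilon> * 1 \<le> \<epsilon> * q" using mult_left_mono[OF q \<epsilon>] .
      thus "q + \<epsilon> \<le> q * (1 + \<epsilon>)" by (simp add: algebra_simps)
      show "0 \<le> q + \<epsilon>" using q \<epsilon> by simp
    qed
    also have "\<dots> = q^t * (1 + \<epsilon>)^t" by (simp add: power_mult_distrib)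
    also have "(1 + \<epsilon>)^t \<le> (1 + \<epsilon>)^M" using t \<epsilon> by (intro power_increasing) auto
    also have "\<dots> \<le> (exp \<epsilon>)^M" using \<epsilon> by (intro power_mono) auto
    also have "\<dots> = exp (real M * \<epsilon>)" by (simp add: exp_of_nat_mult)
    also have "\<dots> \<le> exp (1/4)" using M\<epsilon> by simp
    also have "\<dots> \<le> 3/2" by (rule e14)
    finally show ?thesis using q by (simp add: mult_left_mono)
  qed
  have W: "norm (w t) \<le> 9/5 * (q^t * U)" if t: "t \<le> M" for t
  proof -
    have "norm (w t) \<le> (q + \<epsilon>)^t * (U + real t * \<Xi>)" by (rule W1[OF t])
    also have "\<dots> \<le> (q^t * (3/2)) * (U + real M * \<Xi>)"
      using W2[OF t] t \<Xi> U q \<epsilon> by (intro mult_mono add_left_mono mult_right_mono) auto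
    also have "\<dots> \<le> (q^t * (3/2)) * (U + 3/16 * U)"
      using M\<Xi> q by (intro mult_left_mono) auto
    also have "\<dots> \<le> 9/5 * (q^t * U)" using q U by (simp add: algebra_simps)
    finally show ?thesis .
  qed
  define c where "c = 9/5 * \<epsilon> + \<Xi> / U"
  have u: "t \<le> M \<Longrightarrow> e0 \<bullet> w t \<ge> q^t * U * (1 - real t * c)" for t
  proof (induction t)
    case 0 thus ?case using w0 e0 by (simp add: power2_norm_eq_inner[symmetric])
  next
    case (Suc t)
    hence tM: "t < M" by simp
    have pt: "q^t \<le> q^(Suc t)" using q by simp
    have p1: "1 \<le> q^(Suc t)" using q by (intro one_le_power) auto
    have "q * (q^t * U * (1 - real t * c)) \<le> q * (e0 \<bullet> w t)" using Suc q by (intro mult_left_mono) auto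
    moreover have "\<epsilon> * norm (w t) \<le> \<epsilon> * (9/5 * (q^t * U))" using W[of t] tM \<epsilon> by (intro mult_left_mono) auto
    moreover have "\<epsilon> * (9/5 * (q^t * U)) \<le> \<epsilon> * (9/5 * (q^(Suc t) * U))"
    proof -
      have "q^t * U \<le> q^(Suc t) * U" using pt U by (intro mult_right_mono) auto
      thus ?thesis using \<epsilon> by (intro mult_left_mono) auto
    qed
    moreover have "\<Xi> \<le> q^(Suc t) * \<Xi>" using p1 \<Xi> by (simp add: mult_le_cancel_right1)
    moreover have "q^(Suc t) * U * (1 - real (Suc t) * c) = q * (q^t * U * (1 - real t * c)) - \<epsilon> * (9/5 * (q^(Suc t) * U)) - q^(Suc t) * \<Xi>"
      using U by (simp add: c_def field_simps)
    ultimately show ?case using wb[OF tM] by linarith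
  qed
  have "1/3 \<le> 1 - real M * c"
  proof -
    have "real M * c = 9/5 * (real M * \<epsilon>) + (real M * \<Xi>) / U" by (simp add: c_def algebra_simps)
    also have "\<dots> \<le> 9/5 * (1/4) + (3/16 * U) / U"
      by (intro add_mono mult_left_mono divide_right_mono M\<epsilon> M\<Xi>) (use U in auto)
    finally show ?thesis using U by simp
  qed
  hence "q^M * U * (1/3) \<le> q^M * U * (1 - real M * c)" using q U by (intro mult_left_mono) auto
  with u[of M] show ?thesis by simp
qed



lemma sk_le:
  fixes a :: real assumes "0 \<le> a" shows "(1 - a) / (1 + a)^2 \<le> 1"
proof -
  have p: "(1 + a)^2 > 0" using assms by simp
  have "1 - a \<le> (1 + a)^2" using assms by (simp add: power2_eq_square algebra_simps)
  thus ?thesis using p by (simp add: divide_le_eq_1)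
qed

theorem mainTheorem4:
  fixes g :: "real^'n \<Rightarrow> real"
    and grad :: "real^'n \<Rightarrow> real^'n"
    and hess :: "real^'n \<Rightarrow> real^'n^'n"
    and G :: "real^'n \<Rightarrow> real^'n"
    and L1 L2 \<alpha> \<beta> a b \<Delta>g \<delta> \<epsilon>1 \<epsilon>2 :: real
    and x0 :: "real^'n"
    and \<phi> \<gamma> F R \<eta> r \<omega> r0 :: real
    and M :: nat
    and ytil e0 :: "real^'n"
    and y y' :: "nat \<Rightarrow> real^'n"
  assumes bdd_below: "\<exists>c. \<forall>x. c \<le> g x"
    and grad: "\<And>x. (g has_derivative (\<lambda>h. grad x \<bullet> h)) (at x)"
    and L1_pos: "L1 > 0"
    and grad_lip: "\<And>x z. norm (grad x - grad z) \<le> L1 * norm (x - z)"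
    and \<alpha>_pos: "\<alpha> > 0" and \<beta>_pos: "\<beta> > 0" and L2_pos: "L2 > 0"
    and loc_C2: "\<And>xb. norm (grad xb) \<le> \<alpha> \<Longrightarrow>
        (\<forall>z\<in>cball xb \<beta>. (grad has_derivative (\<lambda>h. hess z *v h)) (at z within cball xb \<beta>))
        \<and> continuous_on (cball xb \<beta>) hess
        \<and> (\<forall>z\<in>cball xb \<beta>. \<forall>w\<in>cball xb \<beta>.
              onorm (\<lambda>h. (hess z - hess w) *v h) \<le> L2 * norm (z - w))"
    and a_nonneg: "0 \<le> a" and b_nonneg: "0 \<le> b"
    and inexact_G: "\<And>x. norm (grad x - G x) \<le> a * norm (grad x) + b"
    and \<Delta>g_pos: "\<Delta>g > 0"
    and \<Delta>g_bound: "g x0 - (INF x. g x) \<le> \<Delta>g"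
    and \<delta>_range: "0 < \<delta>" "\<delta> < 1"
    and \<epsilon>1_range: "0 < \<epsilon>1" "\<epsilon>1 < \<alpha>"
    and \<phi>_def: "\<phi> = 2^24 * max 1 (5 * (L2 * \<epsilon>1) / (L1 * \<epsilon>2)) * (L1^2 / \<delta>)
          * sqrt (real CARD('n))
          * (\<Delta>g * max (L2^2 / \<epsilon>2^5) (1 / (\<epsilon>1^2 * \<epsilon>2)) + 1 / \<epsilon>2^2)"
    and \<gamma>_def: "\<gamma> = log 2 (\<phi> * (log 2 \<phi>)^8)"
    and F_def: "F = 1 / (800 * \<gamma>^3) * ((1 - a) / (1 + a)^2) * (\<epsilon>2^3 / L2^2)"
    and R_def: "R = \<epsilon>2 / (4 * \<gamma> * L2)"
    and \<eta>_def: "\<eta> = (1 - a) / ((1 + a)^2 * L1)"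
    and r_def: "r = \<epsilon>2^2 / (400 * L2 * \<gamma>^3) * min 1 (L1 * \<epsilon>2 / (5 * \<epsilon>1 * L2))"
    and M_def: "real M = (1 + a)^2 / (1 - a) * (L1 * \<gamma> / \<epsilon>2)"
    and M_pos: "M > 0"
    and \<epsilon>2_range: "0 < \<epsilon>2" "\<epsilon>2 < min (4 * \<gamma> * \<beta> * L2) (min L1 (L1^2))"
    and a_bound: "a \<le> min (1/20) (min (1 / (L1 * \<eta> * real M * 2 powr (\<gamma> + 2)))
                                   (R / (\<epsilon>1 * \<eta> * real M * 2 powr (\<gamma> + 2))))"
    and b_bound: "b \<le> min (\<epsilon>1 / 64) (min (sqrt (F / (40 * \<eta> * real M)))
                     (min (sqrt (L1 * F / (real M * (5 * L1 + 1)))) (R / (real M * \<eta> * 2 powr (\<gamma> + 2)))))"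
    and ytil_grad: "norm (grad ytil) \<le> \<epsilon>1"
    and ytil_hess: "lambda_min (hess ytil) \<le> - \<epsilon>2"
    and e0_unit: "norm e0 = 1"
    and e0_eig: "hess ytil *v e0 = lambda_min (hess ytil) *\<^sub>R e0"
    and \<omega>_def: "\<omega> = (1 / \<eta>) * 2 powr (3 - \<gamma>) * R"
    and r0_ge: "r0 \<ge> \<omega>"
    and y0_rel: "y 0 = y' 0 + (\<eta> * r0) *\<^sub>R e0"
    and y0_close: "max (norm (y 0 - ytil)) (norm (y' 0 - ytil)) \<le> \<eta> * r"
    and y_iter: "\<And>t. y (Suc t) = y t - \<eta> *\<^sub>R G (y t)"
    and y'_iter: "\<And>t. y' (Suc t) = y' t - \<eta> *\<^sub>R G (y' t)"
  shows "min (g (y M) - g (y 0)) (g (y' M) - g (y' 0)) \<le> - F"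
proof (rule ccontr)
  assume "\<not> ?thesis"
  hence hy: "g (y M) - g (y 0) > - F" and hy': "g (y' M) - g (y' 0) > - F" by auto
  have a20: "a \<le> 1/20" using a_bound by simp
  have a1: "1 - a > 0" using a20 by simp
  have \<eta>0: "\<eta> > 0" using a1 L1_pos a_nonneg by (simp add: \<eta>_def)
  have \<eta>L1: "\<eta> * L1 \<le> 1"
  proof -
    have "\<eta> * L1 = (1 - a) / (1 + a)^2" using L1_pos by (simp add: \<eta>_def)
    also have "\<dots> \<le> 1" by (rule sk_le[OF a_nonneg])
    finally show ?thesis .
  qed
  have e2L1: "\<epsilon>2 < L1" using \<epsilon>2_range by simp
  have card1: "sqrt (real CARD('n)) \<ge> 1" by simp
  have \<phi>2: "\<phi> \<ge> 2"
  proof -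
    define m1 where "m1 = max 1 (5 * (L2 * \<epsilon>1) / (L1 * \<epsilon>2))"
    define X where "X = \<Delta>g * max (L2^2 / \<epsilon>2^5) (1 / (\<epsilon>1^2 * \<epsilon>2)) + 1 / \<epsilon>2^2"
    have m11: "m1 \<ge> 1" by (simp add: m1_def)
    have mx: "max (L2^2 / \<epsilon>2^5) (1 / (\<epsilon>1^2 * \<epsilon>2)) \<ge> 0" using \<epsilon>2_range \<epsilon>1_range by (simp add: le_max_iff_disj)
    have X1: "X \<ge> 1 / \<epsilon>2^2" using \<Delta>g_pos mx by (simp add: X_def)
    have L1d: "L1^2 / \<delta> \<ge> L1^2"
    proof -
      have "L1^2 * \<delta> \<le> L1^2 * 1" using \<delta>_range by (intro mult_left_mono) auto
      thus ?thesis using \<delta>_range by (simp add: le_divide_eq)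
    qed
    have "1 \<le> L1^2 * (1 / \<epsilon>2^2)" using e2L1 \<epsilon>2_range by (simp add: field_simps power_strict_mono less_imp_le)
    also have "\<dots> \<le> (L1^2 / \<delta>) * X" using L1d X1 \<epsilon>2_range by (intro mult_mono) auto
    finally have LX: "1 \<le> (L1^2 / \<delta>) * X" .
    have "\<phi> = 2^24 * m1 * sqrt (real CARD('n)) * ((L1^2 / \<delta>) * X)"
      unfolding \<phi>_def m1_def X_def by (simp only: mult_ac)
    also have "\<dots> \<ge> 2^24 * 1 * 1 * 1"
      using m11 card1 LX by (intro mult_mono) auto
    finally show ?thesis by simp
  qed
  have \<gamma>1: "\<gamma> \<ge> 1"
  proof -
    have l1: "log 2 \<phi> \<ge> 1" using \<phi>2 by simp
    hence "(log 2 \<phi>)^8 \<ge> 1" by simp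
    hence "\<phi> * (log 2 \<phi>)^8 \<ge> 2" using \<phi>2 by (smt (verit) mult_le_cancel_left1)
    thus ?thesis unfolding \<gamma>_def by simp
  qed
  have \<gamma>0: "\<gamma> > 0" using \<gamma>1 by simp
  have R0: "R > 0" using \<gamma>0 \<epsilon>2_range L2_pos by (simp add: R_def)
  have R\<beta>: "R \<le> \<beta>"
  proof -
    have "\<epsilon>2 < 4 * \<gamma> * \<beta> * L2" using \<epsilon>2_range by simp
    thus ?thesis using \<gamma>0 L2_pos by (simp add: R_def field_simps)
  qed
  define T where "T = \<eta> * real M"
  have T: "T = \<gamma> / \<epsilon>2"
  proof -
    have gen: "(u / (s * l)) * (s / u * (l * c / e)) = c / e" if "u > 0" "s > 0" "l > 0" "e > 0" for u s l c e :: real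
      using that by (simp add: field_simps)
    have "T = ((1 - a) / ((1 + a)^2 * L1)) * ((1 + a)^2 / (1 - a) * (L1 * \<gamma> / \<epsilon>2))"
      unfolding T_def M_def \<eta>_def ..
    also have "\<dots> = \<gamma> / \<epsilon>2" by (rule gen) (use a1 a_nonneg L1_pos \<epsilon>2_range in auto)
    finally show ?thesis .
  qed
  have T0: "T > 0" using T \<gamma>0 \<epsilon>2_range by simp
  define P where "P = 2 powr \<gamma>"
  have P0: "P > 0" by (simp add: P_def)
  have P4: "2 powr (\<gamma> + 2) = 4 * P" by (simp add: P_def powr_add)
  have P1: "P \<ge> 2"
  proof -
    have "2 powr 1 \<le> 2 powr \<gamma>" by (rule powr_mono) (use \<gamma>1 in auto)
    thus ?thesis by (simp add: P_def)
  qed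
  have sk: "(1 - a) / (1 + a)^2 \<le> 1" by (rule sk_le[OF a_nonneg])
  have sk0: "(1 - a) / (1 + a)^2 \<ge> 0" using a1 by simp
  have F0: "F > 0" unfolding F_def using a1 a_nonneg \<gamma>0 \<epsilon>2_range L2_pos by (intro mult_pos_pos divide_pos_pos) auto
  have FR: "F \<le> R^2 / (50 * T)"
  proof -
    have gen: "(e / (4 * c * l))^2 / (50 * (c / e)) = 1 / (800 * c^3) * (e^3 / l^2)" if "e > 0" "c > 0" "l > 0" for e c l :: real
      using that by (simp add: field_simps power2_eq_square power3_eq_cube)
    have "R^2 / (50 * T) = 1 / (800 * \<gamma>^3) * (\<epsilon>2^3 / L2^2)"
      unfolding R_def T by (rule gen) (use \<gamma>0 \<epsilon>2_range L2_pos in auto)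
    moreover have "F \<le> 1 / (800 * \<gamma>^3) * 1 * (\<epsilon>2^3 / L2^2)" unfolding F_def
      using sk \<gamma>0 \<epsilon>2_range L2_pos by (intro mult_right_mono mult_left_mono) auto
    ultimately show ?thesis by simp
  qed
  have bF: "b^2 \<le> F / (40 * T)"
  proof -
    have "b \<le> sqrt (F / (40 * \<eta> * real M))" using b_bound by simp
    hence "b^2 \<le> (sqrt (F / (40 * T)))^2" using b_nonneg by (intro power_mono) (auto simp: T_def mult.assoc)
    also have "\<dots> = F / (40 * T)" using F0 T0 by simp
    finally show ?thesis .
  qed
  have Tb: "T * b \<le> R / (4 * P)"
  proof -
    have "b \<le> R / (real M * \<eta> * 2 powr (\<gamma> + 2))" using b_bound by simp
    moreover have "real M * \<eta> * 2 powr (\<gamma> + 2) = T * (4 * P)" by (simp add: T_def P4 mult_ac)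
    ultimately have "b \<le> R / (T * (4 * P))" by simp
    thus ?thesis using T0 P0 by (simp add: field_simps)
  qed
  have RP: "R / (4 * P) \<le> R / 4" by (rule divide_left_mono) (use R0 P1 in auto)
  have Tb4: "T * b \<le> R / 4" using Tb RP by linarith
  have TaL: "T * a * L1 \<le> 1 / (4 * P)"
  proof -
    have "a \<le> 1 / (L1 * \<eta> * real M * 2 powr (\<gamma> + 2))" using a_bound by simp
    moreover have "L1 * \<eta> * real M * 2 powr (\<gamma> + 2) = L1 * T * (4 * P)" by (simp add: T_def P4 mult_ac)
    ultimately have "a \<le> 1 / (L1 * T * (4 * P))" by simp
    thus ?thesis using T0 P0 L1_pos by (simp add: field_simps)
  qed
  have Tae: "T * a * \<epsilon>1 \<le> R / (4 * P)"
  proof -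
    have "a \<le> R / (\<epsilon>1 * \<eta> * real M * 2 powr (\<gamma> + 2))" using a_bound by simp
    moreover have "\<epsilon>1 * \<eta> * real M * 2 powr (\<gamma> + 2) = \<epsilon>1 * T * (4 * P)" by (simp add: T_def P4 mult_ac)
    ultimately have "a \<le> R / (\<epsilon>1 * T * (4 * P))" by simp
    thus ?thesis using T0 P0 \<epsilon>1_range by (simp add: field_simps)
  qed
  have \<eta>r: "\<eta> * r \<le> R / 100"
  proof -
    have r0: "r \<le> \<epsilon>2^2 / (400 * L2 * \<gamma>^3) * 1" unfolding r_def
      using \<gamma>0 L2_pos by (intro mult_left_mono) auto
    have "\<eta> \<le> 1 / L1" using \<eta>L1 L1_pos by (simp add: field_simps)
    moreover have "r \<ge> 0" unfolding r_def using \<gamma>0 L2_pos \<epsilon>2_range \<epsilon>1_range L1_pos by simp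
    ultimately have "\<eta> * r \<le> 1 / L1 * (\<epsilon>2^2 / (400 * L2 * \<gamma>^3))" using r0 \<eta>0 L1_pos
      by (intro mult_mono) auto
    also have "\<dots> = (R / 100) * (\<epsilon>2 / (L1 * \<gamma>^2))"
      using \<gamma>0 L2_pos L1_pos by (simp add: R_def field_simps power2_eq_square power3_eq_cube)
    also have "\<dots> \<le> (R / 100) * 1"
    proof (intro mult_left_mono)
      have "\<gamma>^2 \<ge> 1" using \<gamma>1 by simp
      hence "L1 \<le> L1 * \<gamma>^2" using L1_pos by simp
      hence "\<epsilon>2 \<le> L1 * \<gamma>^2" using e2L1 by simp
      moreover have "L1 * \<gamma>^2 > 0" using L1_pos \<gamma>0 by simp
      ultimately show "\<epsilon>2 / (L1 * \<gamma>^2) \<le> 1" by (simp add: divide_le_eq_1)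
    qed (use R0 in simp)
    finally show ?thesis by simp
  qed
  have U8: "\<eta> * r0 \<ge> 8 * R / P"
  proof -
    have "\<eta> * \<omega> = 2 powr (3 - \<gamma>) * R" using \<eta>0 by (simp add: \<omega>_def)
    also have "2 powr (3 - \<gamma>) = 8 / P"
    proof -
      have "2 powr (3::real) = 2 ^ 3" by (rule powr_numeral) simp
      thus ?thesis by (simp add: P_def powr_diff)
    qed
    finally have "\<eta> * \<omega> = 8 * R / P" by simp
    moreover have "\<eta> * \<omega> \<le> \<eta> * r0" using r0_ge \<eta>0 by simp
    ultimately show ?thesis by simp
  qed
  have TLR: "T * (L2 * R) = 1/4" using \<gamma>0 \<epsilon>2_range L2_pos by (simp add: T R_def field_simps)
  have growth: "(1 + \<eta> * \<epsilon>2)^M \<ge> P"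
  proof -
    define x where "x = \<eta> * \<epsilon>2"
    have x0: "0 \<le> x" using \<eta>0 \<epsilon>2_range by (simp add: x_def)
    have "\<eta> * \<epsilon>2 \<le> \<eta> * L1" using e2L1 \<eta>0 by (intro mult_left_mono) auto
    hence x1: "x \<le> 1" using \<eta>L1 unfolding x_def by linarith
    have "x * real M = \<gamma>" using T \<epsilon>2_range by (simp add: x_def T_def field_simps)
    hence "P = (2 powr x) powr (real M)" by (simp add: P_def powr_powr)
    also have "\<dots> = (2 powr x)^M" by (simp add: powr_realpow)
    also have "\<dots> \<le> (1 + x)^M" using two_powr_le[OF x0 x1] by (intro power_mono) auto
    finally show ?thesis by (simp add: x_def)
  qed
  define H where "H = hess ytil"
  have gya: "norm (grad ytil) \<le> \<alpha>" using ytil_grad \<epsilon>1_range by simp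
  have hd: "\<And>z. z \<in> cball ytil \<beta> \<Longrightarrow> (grad has_derivative (\<lambda>h. hess z *v h)) (at z within cball ytil \<beta>)"
    using loc_C2[OF gya] by blast
  have yb: "ytil \<in> cball ytil \<beta>" using \<beta>_pos by simp
  have lipH: "\<And>z. z \<in> cball ytil \<beta> \<Longrightarrow> onorm (\<lambda>h. (hess z - hess ytil) *v h) \<le> L2 * norm (z - ytil)"
    using loc_C2[OF gya] yb by blast
  have hdat: "(grad has_derivative (\<lambda>h. H *v h)) (at ytil)"
  proof -
    have "(grad has_derivative (\<lambda>h. H *v h)) (at ytil within ball ytil \<beta>)"
      unfolding H_def by (rule has_derivative_subset[OF hd[OF yb] ball_subset_cball])
    thus ?thesis using at_within_open[of ytil "ball ytil \<beta>"] \<beta>_pos by simp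
  qed
  have Hbnd: "\<And>u. norm (H *v u) \<le> L1 * norm u"
    by (rule deriv_lip_bound[OF hdat]) (rule grad_lip)
  have sym: "\<And>u v. (H *v u) \<bullet> v = (H *v v) \<bullet> u"
    unfolding H_def by (rule hess_sym[OF grad hd lipH]) (use L2_pos \<beta>_pos in auto)
  have bdd: "bdd_below (real_eigenvalues H)"
  proof (rule bdd_belowI[of _ "- L1"])
    fix c assume "c \<in> real_eigenvalues H"
    then obtain v where v: "v \<noteq> 0" "H *v v = c *\<^sub>R v" by (auto simp: real_eigenvalues_def)
    have "\<bar>c\<bar> * norm v \<le> L1 * norm v" using Hbnd[of v] v by simp
    hence "\<bar>c\<bar> \<le> L1" using v by simp
    thus "- L1 \<le> c" by simp
  qed
  define lm where "lm = lambda_min H"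
  have lm1: "lm \<le> - \<epsilon>2" using ytil_hess by (simp add: lm_def H_def)
  have lm2: "- L1 \<le> lm"
  proof -
    have "\<bar>lm\<bar> * norm e0 \<le> L1 * norm e0" using Hbnd[of e0] e0_eig by (simp add: lm_def H_def)
    thus ?thesis using e0_unit by (simp add: abs_le_iff)
  qed
  have contr: "\<And>x. norm (x - \<eta> *\<^sub>R (H *v x)) \<le> (1 - \<eta> * lm) * norm x"
    unfolding lm_def by (rule contraction[OF sym bdd Hbnd L1_pos]) (use lm1 lm2 \<epsilon>2_range \<eta>0 \<eta>L1 in \<open>auto simp: lm_def\<close>)
  define q where "q = 1 - \<eta> * lm"
  have "\<eta> * lm \<le> \<eta> * (- \<epsilon>2)" using lm1 \<eta>0 by (intro mult_left_mono) auto
  hence q1: "q \<ge> 1 + \<eta> * \<epsilon>2" unfolding q_def by simp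
  have "0 \<le> \<eta> * \<epsilon>2" using \<eta>0 \<epsilon>2_range by simp
  hence q1': "q \<ge> 1" using q1 by linarith
  have loc: "norm (z t - ytil) \<le> R"
    if zi: "\<And>t. z (Suc t) = z t - \<eta> *\<^sub>R G (z t)" and zh: "g (z M) - g (z 0) > - F"
      and z0: "norm (z 0 - ytil) \<le> \<eta> * r" and t: "t \<le> M" for z t
  proof -
    have desc: "g (z (Suc s)) \<le> g (z s) + \<eta> * (5 * b^2 - (norm (grad (z s)))^2 / 5)" for s
    proof -
      have "g (z (Suc s)) = g (z s + (- \<eta> *\<^sub>R G (z s)))" by (simp add: zi)
      also have "\<dots> \<le> g (z s) + grad (z s) \<bullet> (- \<eta> *\<^sub>R G (z s)) + L1/2 * (norm (- \<eta> *\<^sub>R G (z s)))^2"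
        by (rule descent[OF grad grad_lip])
      also have "\<dots> \<le> g (z s) + \<eta> * (5 * b^2 - (norm (grad (z s)))^2 / 5)"
        using step_descent_num[OF inexact_G[of "z s"] a_nonneg a20 b_nonneg L1_pos \<eta>_def] by simp
      finally show ?thesis .
    qed
    have step: "norm (z (Suc s) - z s) \<le> \<eta> * ((1 + a) * norm (grad (z s)) + b)" for s
    proof -
      have "norm (G (z s)) \<le> norm (grad (z s)) + norm (grad (z s) - G (z s))"
        by (metis norm_triangle_sub norm_minus_commute add.commute)
      also have "\<dots> \<le> (1 + a) * norm (grad (z s)) + b" using inexact_G[of "z s"] by (simp add: algebra_simps)
      finally have "norm (G (z s)) \<le> (1 + a) * norm (grad (z s)) + b" .
      moreover have "norm (z (Suc s) - z s) = \<eta> * norm (G (z s))" using \<eta>0 by (simp add: zi)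
      ultimately show ?thesis using \<eta>0 by (simp add: mult_left_mono)
    qed
    have "norm (z t - z 0) \<le> 17/25 * R"
      by (rule localize[where gz="\<lambda>s. g (z s)", OF desc step _ zh \<eta>0 a_nonneg a20 b_nonneg T_def R0 FR bF Tb4 T0 t]) simp
    moreover have "norm (z t - ytil) \<le> norm (z t - z 0) + norm (z 0 - ytil)"
    proof -
      have "z t - ytil = (z t - z 0) + (z 0 - ytil)" by simp
      thus ?thesis by (metis norm_triangle_ineq)
    qed
    ultimately show ?thesis using z0 \<eta>r R0 by linarith
  qed
  have y0c: "norm (y 0 - ytil) \<le> \<eta> * r" and y'0c: "norm (y' 0 - ytil) \<le> \<eta> * r" using y0_close by auto
  have yR: "t \<le> M \<Longrightarrow> y t \<in> cball ytil R" for t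
    using loc[OF y_iter hy y0c] by (simp add: dist_norm norm_minus_commute)
  have y'R: "t \<le> M \<Longrightarrow> y' t \<in> cball ytil R" for t
    using loc[OF y'_iter hy' y'0c] by (simp add: dist_norm norm_minus_commute)
  define w where "w t = y t - y' t" for t
  define \<epsilon>' where "\<epsilon>' = \<eta> * (L2 * R)"
  define \<Xi> where "\<Xi> = \<eta> * (2 * (a * (\<epsilon>1 + L1 * R) + b))"
  have Eg: "norm (grad x - G x) \<le> a * (\<epsilon>1 + L1 * R) + b" if x: "x \<in> cball ytil R" for x
  proof -
    have "norm (grad x) \<le> norm (grad ytil) + norm (grad x - grad ytil)"
      by (metis norm_triangle_sub)
    also have "\<dots> \<le> \<epsilon>1 + L1 * R"
    proof -
      have "norm (grad x - grad ytil) \<le> L1 * norm (x - ytil)" by (rule grad_lip)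
      also have "\<dots> \<le> L1 * R"
      proof -
        have "norm (x - ytil) \<le> R" using x by (simp add: dist_norm norm_minus_commute)
        thus ?thesis using L1_pos by (intro mult_left_mono) auto
      qed
      finally show ?thesis using ytil_grad by simp
    qed
    finally have ng: "norm (grad x) \<le> \<epsilon>1 + L1 * R" .
    have "a * norm (grad x) \<le> a * (\<epsilon>1 + L1 * R)" by (rule mult_left_mono[OF ng a_nonneg])
    thus ?thesis using inexact_G[of x] by linarith
  qed
  have errb: "norm (G (y t) - G (y' t) - H *v w t) \<le> L2 * R * norm (w t) + 2 * (a * (\<epsilon>1 + L1 * R) + b)"
    if t: "t \<le> M" for t
  proof -
    have lin: "norm (grad (y t) - grad (y' t) - H *v w t) \<le> L2 * R * norm (w t)"
      unfolding H_def w_def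
      by (rule grad_lin[OF hd lipH _ _ R\<beta> yR[OF t] y'R[OF t]]) (use L2_pos R0 in auto)
    have eq: "G (y t) - G (y' t) - H *v w t = (grad (y t) - grad (y' t) - H *v w t) - (grad (y t) - G (y t)) + (grad (y' t) - G (y' t))"
      by (simp add: algebra_simps)
    have "norm (G (y t) - G (y' t) - H *v w t) \<le> norm (grad (y t) - grad (y' t) - H *v w t) + norm (grad (y t) - G (y t)) + norm (grad (y' t) - G (y' t))"
    proof -
      have "norm ((grad (y t) - grad (y' t) - H *v w t) - (grad (y t) - G (y t)) + (grad (y' t) - G (y' t)))
        \<le> norm ((grad (y t) - grad (y' t) - H *v w t) - (grad (y t) - G (y t))) + norm (grad (y' t) - G (y' t))"
        by (rule norm_triangle_ineq)
      also have "norm ((grad (y t) - grad (y' t) - H *v w t) - (grad (y t) - G (y t)))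
        \<le> norm (grad (y t) - grad (y' t) - H *v w t) + norm (grad (y t) - G (y t))"
        by (rule norm_triangle_ineq4)
      finally show ?thesis unfolding eq by simp
    qed
    moreover note lin Eg[OF yR[OF t]] Eg[OF y'R[OF t]]
    ultimately show ?thesis by argo
  qed
  have wrec: "w (Suc t) = (w t - \<eta> *\<^sub>R (H *v w t)) - \<eta> *\<^sub>R (G (y t) - G (y' t) - H *v w t)" for t
    by (simp add: w_def y_iter y'_iter algebra_simps)
  have ebnd: "\<eta> * norm (G (y t) - G (y' t) - H *v w t) \<le> \<epsilon>' * norm (w t) + \<Xi>" if t: "t \<le> M" for t
    using mult_left_mono[OF errb[OF t], of \<eta>] \<eta>0 by (simp add: \<epsilon>'_def \<Xi>_def algebra_simps)
  have wa: "norm (w (Suc t)) \<le> (q + \<epsilon>') * norm (w t) + \<Xi>" if t: "t < M" for t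
  proof -
    have "norm (w (Suc t)) \<le> norm (w t - \<eta> *\<^sub>R (H *v w t)) + norm (\<eta> *\<^sub>R (G (y t) - G (y' t) - H *v w t))"
      unfolding wrec by (rule norm_triangle_ineq4)
    also have "\<dots> \<le> q * norm (w t) + (\<epsilon>' * norm (w t) + \<Xi>)"
      using contr[of "w t"] ebnd[of t] t \<eta>0 by (intro add_mono) (auto simp: q_def)
    finally show ?thesis by (simp add: algebra_simps)
  qed
  have wb: "e0 \<bullet> w (Suc t) \<ge> q * (e0 \<bullet> w t) - \<epsilon>' * norm (w t) - \<Xi>" if t: "t < M" for t
  proof -
    define er where "er = G (y t) - G (y' t) - H *v w t"
    have he: "e0 \<bullet> (H *v w t) = lm * (e0 \<bullet> w t)"
    proof -
      have "e0 \<bullet> (H *v w t) = (H *v w t) \<bullet> e0" by (rule inner_commute)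
      also have "\<dots> = (H *v e0) \<bullet> w t" by (rule sym)
      also have "\<dots> = lm * (e0 \<bullet> w t)" using e0_eig by (simp add: lm_def H_def)
      finally show ?thesis .
    qed
    have "e0 \<bullet> w (Suc t) = q * (e0 \<bullet> w t) - \<eta> * (e0 \<bullet> er)"
      unfolding wrec er_def[symmetric] by (simp add: inner_diff_right he q_def algebra_simps)
    moreover have "\<eta> * (e0 \<bullet> er) \<le> \<eta> * norm er"
    proof -
      have "e0 \<bullet> er \<le> norm e0 * norm er" by (rule norm_cauchy_schwarz)
      thus ?thesis using e0_unit \<eta>0 by simp
    qed
    moreover have "\<eta> * norm er \<le> \<epsilon>' * norm (w t) + \<Xi>" unfolding er_def using ebnd[of t] t by simp
    ultimately show ?thesis by linarith
  qed
  have w0: "w 0 = (\<eta> * r0) *\<^sub>R e0" by (simp add: w_def y0_rel)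
  have \<epsilon>'0: "\<epsilon>' \<ge> 0" using \<eta>0 L2_pos R0 by (simp add: \<epsilon>'_def)
  have \<Xi>0: "\<Xi> \<ge> 0" using \<eta>0 a_nonneg b_nonneg \<epsilon>1_range L1_pos R0 by (simp add: \<Xi>_def)
  have "8 * R / P > 0" using R0 P0 by simp
  hence U0: "\<eta> * r0 > 0" using U8 by linarith
  have M\<epsilon>: "real M * \<epsilon>' \<le> 1/4" using TLR by (simp add: \<epsilon>'_def T_def algebra_simps)
  have M\<Xi>: "real M * \<Xi> \<le> 3/16 * (\<eta> * r0)"
  proof -
    have "real M * \<Xi> = 2 * (T * a * \<epsilon>1 + (T * a * L1) * R + T * b)"
      by (simp add: \<Xi>_def T_def algebra_simps)
    also have "\<dots> \<le> 2 * (R / (4 * P) + (1 / (4 * P)) * R + R / (4 * P))"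
      using Tae TaL Tb R0 by (intro mult_left_mono add_mono mult_right_mono) auto
    also have "\<dots> = 3/16 * (8 * R / P)" using P0 by (simp add: field_simps)
    also have "\<dots> \<le> 3/16 * (\<eta> * r0)" using U8 by simp
    finally show ?thesis .
  qed
  have cpl: "e0 \<bullet> w M \<ge> 1/3 * q^M * (\<eta> * r0)"
    by (rule coupling[OF wa wb w0 e0_unit q1' \<epsilon>'0 \<Xi>0 U0 M\<epsilon> M\<Xi>])
  have "q^M \<ge> P"
  proof -
    have "(1 + \<eta> * \<epsilon>2)^M \<le> q^M" using q1 \<eta>0 \<epsilon>2_range by (intro power_mono) auto
    thus ?thesis using growth by simp
  qed
  hence "1/3 * q^M * (\<eta> * r0) \<ge> 1/3 * P * (8 * R / P)"
    using U8 P0 R0 by (intro mult_mono) auto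
  hence low: "e0 \<bullet> w M \<ge> 8/3 * R" using cpl P0 by simp
  have "e0 \<bullet> w M \<le> norm (w M)" using norm_cauchy_schwarz[of e0 "w M"] e0_unit by simp
  also have "\<dots> \<le> norm (y M - ytil) + norm (y' M - ytil)"
  proof -
    have "w M = (y M - ytil) - (y' M - ytil)" by (simp add: w_def)
    thus ?thesis by (metis norm_triangle_ineq4)
  qed
  also have "\<dots> \<le> R + R" using yR[of M] y'R[of M] by (intro add_mono) (auto simp: dist_norm norm_minus_commute)
  finally show False using low R0 by simp
qed


end
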